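(* Let $N\in\mathbb Z$, let $q_0,\dots,q_{T-1}\in\mathbb Z$, and let $Q_0,\dots,Q_{T-1}\in\mathbb Q$ satisfy $Q_i-Q_j\notin\mathbb Z$ for all $i\neq j$. Then the diagonal map $f\mapsto(f,\dots,f)$ induces an isomorphism of vector spaces $$\mathbb C[z,z^{-1}]\Big/\bigcap_{s=0}^{T-1}O(N,Q_s,q_s;z)\ \xrightarrow{\ \sim\ }\ \bigoplus_{s=0}^{T-1}\mathbb C[z,z^{-1}]/O(N,Q_s,q_s;z).$$
   Context: $T$ is a positive integer. For $N,q\in\mathbb Z$ and $Q\in\mathbb Q$, $O(N,Q,q;z)$ is the subspace of $\mathbb C[z,z^{-1}]$ spanned by the monomials $z^i$ with $i\ge N+1$ together with the Laurent polynomials $\sum_{i=0}^{N-q-j}\binom Qi z^{i+q+j}$ for $j=0,-1,-2,\dots$. *)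

theory Defs
  imports Complex_Main "HOL-Library.Function_Algebras" "HOL-Library.FuncSet"
begin

text \<open>Laurent polynomials in z over the complex numbers are represented as
  finitely supported coefficient functions int \<Rightarrow> complex; k \<mapsto> coefficient of z^k.\<close>

definition laurent :: "(int \<Rightarrow> complex) set" where
  "laurent = {f. finite {k. f k \<noteq> 0}}"

definition lmono :: "int \<Rightarrow> int \<Rightarrow> complex" where
  "lmono i = (\<lambda>k. if k = i then 1 else 0)"

definition cscale :: "complex \<Rightarrow> (int \<Rightarrow> complex) \<Rightarrow> (int \<Rightarrow> complex)" where
  "cscale c f = (\<lambda>k. c * f k)"

definition Opoly :: "int \<Rightarrow> rat \<Rightarrow> int \<Rightarrow> int \<Rightarrow> (int \<Rightarrow> complex)" where
  "Opoly N Q q j = (\<Sum>i\<in>{0..N - q - j}. cscale ((of_rat Q :: complex) gchoose (nat i)) (lmono (i + q + j)))"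

definition Ospace :: "int \<Rightarrow> rat \<Rightarrow> int \<Rightarrow> (int \<Rightarrow> complex) set" where
  "Ospace N Q q = module.span cscale
     ({lmono i | i. i \<ge> N + 1} \<union> {Opoly N Q q j | j. j \<le> 0})"

definition coset :: "(int \<Rightarrow> complex) set \<Rightarrow> (int \<Rightarrow> complex) \<Rightarrow> (int \<Rightarrow> complex) set" where
  "coset W f = {f + g | g. g \<in> W}"

definition quot :: "(int \<Rightarrow> complex) set \<Rightarrow> (int \<Rightarrow> complex) set \<Rightarrow> (int \<Rightarrow> complex) set set" where
  "quot V W = coset W ` V"

end

theory Submission
  imports Defs "HOL-Computational_Algebra.Polynomial_FPS"
begin

interpretation M: module cscale
  by unfold_locales (auto simp: cscale_def fun_eq_iff algebra_simps)

definition supp :: "(int \<Rightarrow> complex) \<Rightarrow> int set" where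
  "supp f = {j. f j \<noteq> 0}"

lemma laurent_iff: "f \<in> laurent \<longleftrightarrow> finite (supp f)"
  by (simp add: laurent_def supp_def)

lemma laurent_add[intro]: "f \<in> laurent \<Longrightarrow> g \<in> laurent \<Longrightarrow> f + g \<in> laurent"
  unfolding laurent_iff supp_def
  by (rule finite_subset[of _ "{j. f j \<noteq> 0} \<union> {j. g j \<noteq> 0}"]) auto

lemma laurent_uminus[intro]: "f \<in> laurent \<Longrightarrow> - f \<in> laurent"
  unfolding laurent_iff supp_def by simp

lemma laurent_diff[intro]: "f \<in> laurent \<Longrightarrow> g \<in> laurent \<Longrightarrow> f - g \<in> laurent"
  using laurent_add[of f "-g"] laurent_uminus[of g] by simp

lemma laurent_scale[intro]: "f \<in> laurent \<Longrightarrow> cscale c f \<in> laurent"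
  unfolding laurent_iff supp_def cscale_def
  by (rule finite_subset[of _ "{j. f j \<noteq> 0}"]) auto

lemma laurent_zero[intro]: "0 \<in> laurent"
  unfolding laurent_iff supp_def by simp

lemma laurent_lmono[intro]: "lmono i \<in> laurent"
  unfolding laurent_iff supp_def lmono_def
  by (rule finite_subset[of _ "{i}"]) auto

lemma laurent_sum[intro]: "(\<And>x. x \<in> A \<Longrightarrow> f x \<in> laurent) \<Longrightarrow> sum f A \<in> laurent"
  by (induction A rule: infinite_finite_induct) auto

lemma sum_fun_apply: "(sum f A) x = (\<Sum>a\<in>A. f a x)"
  by (induction A rule: infinite_finite_induct) auto

definition bc :: "complex \<Rightarrow> int \<Rightarrow> complex" where
  "bc b n = (if n \<ge> 0 then b gchoose nat n else 0)"

definition phi :: "complex \<Rightarrow> int \<Rightarrow> (int \<Rightarrow> complex) \<Rightarrow> complex" where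
  "phi b k f = (\<Sum>j\<in>supp f. f j * bc b (k - j))"

lemma phi_superset:
  assumes "finite S" "supp f \<subseteq> S"
  shows "phi b k f = (\<Sum>j\<in>S. f j * bc b (k - j))"
  unfolding phi_def
  by (rule sum.mono_neutral_left) (use assms in \<open>auto simp: supp_def\<close>)

lemma phi_add:
  assumes "f \<in> laurent" "g \<in> laurent"
  shows "phi b k (f + g) = phi b k f + phi b k g"
proof -
  let ?S = "supp f \<union> supp g"
  have fin: "finite ?S" using assms by (auto simp: laurent_iff)
  have "phi b k (f + g) = (\<Sum>j\<in>?S. (f+g) j * bc b (k - j))"
    by (rule phi_superset[OF fin]) (auto simp: supp_def)
  moreover have "phi b k f = (\<Sum>j\<in>?S. f j * bc b (k - j))"
    by (rule phi_superset[OF fin]) auto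
  moreover have "phi b k g = (\<Sum>j\<in>?S. g j * bc b (k - j))"
    by (rule phi_superset[OF fin]) auto
  ultimately show ?thesis by (simp add: sum.distrib algebra_simps)
qed

lemma phi_scale:
  assumes "f \<in> laurent"
  shows "phi b k (cscale c f) = c * phi b k f"
proof -
  have fin: "finite (supp f)" using assms by (auto simp: laurent_iff)
  have "phi b k (cscale c f) = (\<Sum>j\<in>supp f. cscale c f j * bc b (k - j))"
    by (rule phi_superset[OF fin]) (auto simp: supp_def cscale_def)
  then show ?thesis by (simp add: phi_def cscale_def sum_distrib_left algebra_simps)
qed

lemma phi_zero[simp]: "phi b k 0 = 0"
  by (simp add: phi_def supp_def)

lemma phi_uminus:
  assumes "f \<in> laurent"
  shows "phi b k (- f) = - phi b k f"
proof -
  have "- f = cscale (-1) f" by (simp add: cscale_def fun_eq_iff)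
  then show ?thesis using phi_scale[OF assms, of b k "-1"] by simp
qed

lemma phi_diff:
  assumes "f \<in> laurent" "g \<in> laurent"
  shows "phi b k (f - g) = phi b k f - phi b k g"
  using phi_add[OF assms(1) laurent_uminus[OF assms(2)]] phi_uminus[OF assms(2)] by simp

lemma phi_lmono: "phi b k (lmono i) = bc b (k - i)"
  by (subst phi_superset[of "{i}"]) (auto simp: supp_def lmono_def)

lemma Opoly_apply:
  "Opoly N Q q j t = (if q + j \<le> t \<and> t \<le> N then of_rat Q gchoose nat (t - q - j) else 0)"
proof -
  have "Opoly N Q q j t = (\<Sum>i\<in>{0..N - q - j}. (if i = t - q - j then of_rat Q gchoose nat i else 0))"
    unfolding Opoly_def sum_fun_apply cscale_def lmono_def
    by (rule sum.cong) auto
  also have "\<dots> = (if q + j \<le> t \<and> t \<le> N then of_rat Q gchoose nat (t - q - j) else 0)"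
    by (subst sum.delta) auto
  finally show ?thesis .
qed

lemma laurent_Opoly[intro]: "Opoly N Q q j \<in> laurent"
  unfolding Opoly_def by (intro laurent_sum laurent_scale laurent_lmono)

lemma phi_Opoly:
  assumes "q + j < k" "k \<le> N"
  shows "phi (- of_rat Q) k (Opoly N Q q j) = 0"
proof -
  define a :: complex where "a = of_rat Q"
  define m where "m = nat (N - q - j)"
  define n where "n = nat (k - q - j)"
  have n0: "n > 0" "n \<le> m" using assms by (auto simp: n_def m_def)
  let ?g = "\<lambda>i::nat. q + j + int i"
  have inj: "inj_on ?g {0..m}" by (auto simp: inj_on_def)
  have "phi (- a) k (Opoly N Q q j) = (\<Sum>t\<in>?g ` {0..m}. Opoly N Q q j t * bc (- a) (k - t))"
  proof (rule phi_superset)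
    show "supp (Opoly N Q q j) \<subseteq> ?g ` {0..m}"
    proof
      fix t assume "t \<in> supp (Opoly N Q q j)"
      then have t: "q + j \<le> t" "t \<le> N" by (auto simp: supp_def Opoly_apply split: if_splits)
      then have "t = ?g (nat (t - q - j))" "nat (t - q - j) \<in> {0..m}" by (auto simp: m_def)
      then show "t \<in> ?g ` {0..m}" by blast
    qed
  qed auto
  also have "\<dots> = (\<Sum>i\<in>{0..m}. (a gchoose i) * bc (- a) (int n - int i))"
  proof -
    have e: "k - (q + j + int x) = int n - int x" for x using assms by (simp add: n_def)
    have l: "x \<le> m \<Longrightarrow> q + j + int x \<le> N" for x using assms by (simp add: m_def)
    show ?thesis
      by (subst sum.reindex[OF inj]) (use assms in \<open>auto simp: Opoly_apply a_def e l intro!: sum.cong\<close>)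
  qed
  also have "\<dots> = (\<Sum>i\<in>{0..n}. (a gchoose i) * ((- a) gchoose (n - i)))"
  proof -
    have "(\<Sum>i\<in>{0..m}. (a gchoose i) * bc (- a) (int n - int i)) = (\<Sum>i\<in>{0..n}. (a gchoose i) * bc (- a) (int n - int i))"
      by (rule sum.mono_neutral_right) (use n0 in \<open>auto simp: bc_def\<close>)
    also have "\<dots> = (\<Sum>i\<in>{0..n}. (a gchoose i) * ((- a) gchoose (n - i)))"
      by (rule sum.cong) (auto simp: bc_def nat_diff_distrib)
    finally show ?thesis .
  qed
  also have "\<dots> = 0"
    using n0 by (subst gbinomial_Vandermonde) (cases n, auto)
  finally show ?thesis by (simp add: a_def)
qed

lemma laurent_expand:
  assumes "f \<in> laurent"
  shows "f = (\<Sum>t\<in>supp f. cscale (f t) (lmono t))"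
proof
  fix x
  have "(\<Sum>t\<in>supp f. cscale (f t) (lmono t)) x = (\<Sum>t\<in>supp f. if t = x then f x else 0)"
    unfolding sum_fun_apply cscale_def lmono_def by (rule sum.cong) auto
  also have "\<dots> = f x" using assms by (subst sum.delta) (auto simp: laurent_iff supp_def)
  finally show "f x = (\<Sum>t\<in>supp f. cscale (f t) (lmono t)) x" by simp
qed

definition Ochar :: "int \<Rightarrow> rat \<Rightarrow> int \<Rightarrow> (int \<Rightarrow> complex) set" where
  "Ochar N Q q = {f \<in> laurent. \<forall>k. q < k \<and> k \<le> N \<longrightarrow> phi (- of_rat Q) k f = 0}"

lemma Ospace_sub: "Ospace N Q q \<subseteq> Ochar N Q q"
proof
  fix f assume "f \<in> Ospace N Q q"
  then show "f \<in> Ochar N Q q"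
    unfolding Ospace_def
  proof (induction rule: M.span_induct)
    case base
    show ?case unfolding M.subspace_def
      by (auto simp: Ochar_def phi_add phi_scale)
  next
    case (step x)
    then show ?case
    proof
      assume "x \<in> {lmono i |i. N + 1 \<le> i}"
      then show ?thesis by (auto simp: Ochar_def phi_lmono bc_def)
    next
      assume "x \<in> {Opoly N Q q j |j. j \<le> 0}"
      then obtain j where "j \<le> 0" "x = Opoly N Q q j" by auto
      then show ?thesis by (auto simp: Ochar_def intro!: phi_Opoly)
    qed
  qed
qed

lemma phi_low:
  assumes "f \<in> laurent" "\<forall>t<m. f t = 0"
  shows "phi b m f = f m"
proof -
  have "phi b m f = (\<Sum>j\<in>supp f. if j = m then f m else 0)"
    unfolding phi_def
  proof (rule sum.cong)
    fix j assume "j \<in> supp f"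
    then have "j \<ge> m" using assms(2) by (force simp: supp_def)
    then show "f j * bc b (m - j) = (if j = m then f m else 0)"
      by (auto simp: bc_def)
  qed simp
  also have "\<dots> = f m" using assms(1) by (subst sum.delta) (auto simp: laurent_iff supp_def)
  finally show ?thesis .
qed

lemma Ochar_sub_aux:
  "nat (N + 1 - m) = d \<Longrightarrow> f \<in> Ochar N Q q \<Longrightarrow> \<forall>t<m. f t = 0 \<Longrightarrow> f \<in> Ospace N Q q"
proof (induction d arbitrary: m f)
  case 0
  then have mN: "m > N" by simp
  have f: "f \<in> laurent" using 0 by (simp add: Ochar_def)
  have "(\<Sum>t\<in>supp f. cscale (f t) (lmono t)) \<in> Ospace N Q q"
    unfolding Ospace_def
  proof (intro M.span_sum M.span_scale M.span_base)
    fix t assume "t \<in> supp f"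
    then have "t \<ge> m" using 0(3) by (force simp: supp_def)
    then show "lmono t \<in> {lmono i |i. N + 1 \<le> i} \<union> {Opoly N Q q j |j. j \<le> 0}"
      using mN by auto
  qed
  then show ?case using laurent_expand[OF f] by simp
next
  case (Suc d)
  have f: "f \<in> laurent" and cond: "\<forall>k. q < k \<and> k \<le> N \<longrightarrow> phi (- of_rat Q) k f = 0"
    using Suc by (auto simp: Ochar_def)
  have d: "nat (N + 1 - (m + 1)) = d" and mN: "m \<le> N" using Suc(2) by auto
  show ?case
  proof (cases "f m = 0")
    case True
    have "\<forall>t<m + 1. f t = 0"
    proof (intro allI impI)
      fix t :: int assume "t < m + 1"
      then consider "t < m" | "t = m" by linarith
      then show "f t = 0" using Suc(4) True by cases auto
    qed
    then show ?thesis using Suc.IH[OF d Suc(3)] by blast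
  next
    case False
    show ?thesis
    proof (cases "m \<le> q")
      case True
      define g where "g = f - cscale (f m) (Opoly N Q q (m - q))"
      have gl: "g \<in> laurent" unfolding g_def using f by auto
      have "g \<in> Ochar N Q q"
        unfolding Ochar_def using gl cond True
        by (auto simp: g_def phi_diff phi_scale f laurent_scale laurent_Opoly phi_Opoly)
      moreover have "\<forall>t<m + 1. g t = 0"
        using Suc(4) mN by (auto simp: g_def cscale_def Opoly_apply)
      ultimately have "g \<in> Ospace N Q q" using Suc.IH[OF d] by blast
      moreover have "cscale (f m) (Opoly N Q q (m - q)) \<in> Ospace N Q q"
        unfolding Ospace_def using True
        by (intro M.span_scale M.span_base) auto
      ultimately have "g + cscale (f m) (Opoly N Q q (m - q)) \<in> Ospace N Q q"
        unfolding Ospace_def by (rule M.span_add)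
      then show ?thesis by (simp add: g_def)
    next
      case False
      then have "phi (- of_rat Q) m f = 0" using cond mN by auto
      then show ?thesis using phi_low[OF f Suc(4)] \<open>f m \<noteq> 0\<close> by simp
    qed
  qed
qed

lemma Ospace_char: "Ospace N Q q = Ochar N Q q"
proof
  show "Ochar N Q q \<subseteq> Ospace N Q q"
  proof
    fix f assume fO: "f \<in> Ochar N Q q"
    then have "finite (supp f)" by (simp add: Ochar_def laurent_iff)
    obtain m where "\<forall>t<m. f t = 0"
    proof (cases "supp f = {}")
      case True then show ?thesis using that[of 0] by (auto simp: supp_def)
    next
      case False
      then show ?thesis using that[of "Min (supp f)"] \<open>finite (supp f)\<close>
        by (metis (mono_tags, lifting) Min_le mem_Collect_eq not_le supp_def)
    qed
    then show "f \<in> Ospace N Q q" using Ochar_sub_aux[OF refl fO] by blast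
  qed
qed (rule Ospace_sub)

lemma fin_surj:
  fixes U :: "('a \<Rightarrow> complex) set"
  assumes "finite A" "(\<lambda>x. 0) \<in> U"
    and "\<And>u v. u \<in> U \<Longrightarrow> v \<in> U \<Longrightarrow> (\<lambda>x. u x + v x) \<in> U"
    and "\<And>c u. u \<in> U \<Longrightarrow> (\<lambda>x. c * u x) \<in> U"
    and "\<And>a. (\<forall>u\<in>U. (\<Sum>x\<in>A. a x * u x) = 0) \<Longrightarrow> \<forall>x\<in>A. a x = 0"
  shows "\<exists>u\<in>U. \<forall>x\<in>A. u x = v x"
  using assms
proof (induction A arbitrary: U v rule: finite_induct)
  case empty
  then show ?case by blast
next
  case (insert x0 A U v)
  have "\<exists>w\<in>U. w x0 = 1"
  proof (rule ccontr)
    assume no: "\<not> (\<exists>w\<in>U. w x0 = 1)"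
    have z: "\<forall>u\<in>U. u x0 = 0"
    proof
      fix u assume u: "u \<in> U"
      show "u x0 = 0"
      proof (rule ccontr)
        assume "u x0 \<noteq> 0"
        have m: "(\<lambda>x. (1 / u x0) * u x) \<in> U" using insert.prems(3)[OF u, of "1 / u x0"] .
        have "\<exists>w\<in>U. w x0 = 1"
          by (rule bexI[where x="\<lambda>x. (1 / u x0) * u x", OF _ m]) (simp add: \<open>u x0 \<noteq> 0\<close>)
        then show False using no by blast
      qed
    qed
    let ?a = "\<lambda>x. if x = x0 then (1::complex) else 0"
    have "\<forall>u\<in>U. (\<Sum>x\<in>insert x0 A. ?a x * u x) = 0"
    proof
      fix u assume "u \<in> U"
      have "(\<Sum>x\<in>A. ?a x * u x) = 0" using insert.hyps(2) by (intro sum.neutral) auto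
      then show "(\<Sum>x\<in>insert x0 A. ?a x * u x) = 0"
        using z \<open>u \<in> U\<close> insert.hyps by (simp add: sum.insert)
    qed
    then have "\<forall>x\<in>insert x0 A. ?a x = 0" by (rule insert.prems(4)[of ?a])
    then show False by simp
  qed
  then obtain w where w: "w \<in> U" "w x0 = 1" by blast
  define U' where "U' = {u \<in> U. u x0 = 0}"
  have "\<exists>u\<in>U'. \<forall>x\<in>A. u x = v x - v x0 * w x"
  proof (rule insert.IH)
    show "(\<lambda>x. 0) \<in> U'" using insert.prems(1) by (simp add: U'_def)
    show "(\<lambda>x. u x + v x) \<in> U'" if "u \<in> U'" "v \<in> U'" for u v
      using that insert.prems(2) by (auto simp: U'_def)
    show "(\<lambda>x. c * u x) \<in> U'" if "u \<in> U'" for c u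
      using that insert.prems(3) by (auto simp: U'_def)
    show "\<forall>x\<in>A. a x = 0" if ann: "\<forall>u\<in>U'. (\<Sum>x\<in>A. a x * u x) = 0" for a
    proof -
      define a' where "a' = a(x0 := - (\<Sum>x\<in>A. a x * w x))"
      have "(\<Sum>x\<in>insert x0 A. a' x * u x) = 0" if u: "u \<in> U" for u
      proof -
        let ?u' = "\<lambda>x. u x + (- u x0) * w x"
        have "(\<lambda>x. (- u x0) * w x) \<in> U" by (rule insert.prems(3)[OF w(1)])
        from insert.prems(2)[OF u this] have "?u' \<in> U" .
        then have "?u' \<in> U'" using w by (simp add: U'_def)
        from bspec[OF ann this] have "(\<Sum>x\<in>A. a x * ?u' x) = 0" by simp
        then have e: "(\<Sum>x\<in>A. a x * u x) = u x0 * (\<Sum>x\<in>A. a x * w x)"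
          by (simp add: algebra_simps sum_distrib_left sum_subtractf)
        have "(\<Sum>x\<in>A. a' x * u x) = (\<Sum>x\<in>A. a x * u x)"
          using insert.hyps(2) by (intro sum.cong) (auto simp: a'_def)
        then show ?thesis using insert.hyps e by (simp add: sum.insert a'_def)
      qed
      then have "\<forall>x\<in>insert x0 A. a' x = 0" using insert.prems(4)[of a'] by blast
      then have all: "\<And>x. x \<in> A \<Longrightarrow> a' x = 0" by blast
      show ?thesis
      proof
        fix x assume "x \<in> A"
        then have "x \<noteq> x0" using insert.hyps(2) by blast
        then show "a x = 0" using all[OF \<open>x \<in> A\<close>] by (simp add: a'_def)
      qed
    qed
  qed
  then obtain u' where u': "u' \<in> U'" "\<forall>x\<in>A. u' x = v x - v x0 * w x" by blast
  let ?u = "\<lambda>x. u' x + v x0 * w x"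
  have "(\<lambda>x. v x0 * w x) \<in> U" by (rule insert.prems(3)[OF w(1)])
  have "u' \<in> U" using u'(1) by (simp add: U'_def)
  from insert.prems(2)[OF this \<open>(\<lambda>x. v x0 * w x) \<in> U\<close>] have uU: "?u \<in> U" .
  show ?case
  proof (rule bexI[OF _ uU], rule ballI)
    fix x assume "x \<in> insert x0 A"
    then show "?u x = v x" using u' w by (auto simp: U'_def)
  qed
qed

lemma binom_deriv:
  "(1 + fps_X) * fps_deriv (fps_binomial b) = fps_const b * fps_binomial (b :: complex)"
proof (rule fps_ext)
  fix n
  have a: "of_nat (Suc n) * (b gchoose Suc n) = (b - of_nat n) * (b gchoose n)"
    by (metis gbinomial_absorb_comp gbinomial_absorption)
  have "fps_nth ((1 + fps_X) * fps_deriv (fps_binomial b)) n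
        = fps_nth (fps_deriv (fps_binomial b)) n + fps_nth (fps_X * fps_deriv (fps_binomial b)) n"
    by (simp add: distrib_right)
  also have "\<dots> = (b - of_nat n) * (b gchoose n) + of_nat n * (b gchoose n)"
    using a by (cases n) (simp_all add: fps_X_mult_nth algebra_simps)
  also have "\<dots> = fps_nth (fps_const b * fps_binomial b) n" by (simp add: algebra_simps)
  finally show "fps_nth ((1 + fps_X) * fps_deriv (fps_binomial b)) n = fps_nth (fps_const b * fps_binomial b) n" .
qed

definition Lop :: "complex \<Rightarrow> complex \<Rightarrow> complex poly \<Rightarrow> complex poly" where
  "Lop b c R = smult (b - c) R + [:1,1:] * pderiv R"

lemma Lop_fps:
  "(1 + fps_X) * fps_deriv (fps_binomial b * fps_of_poly R) - fps_const c * (fps_binomial b * fps_of_poly R)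
   = fps_binomial b * fps_of_poly (Lop b c R)"
proof -
  let ?B = "fps_binomial b" and ?P = "fps_of_poly R"
  have l: "fps_of_poly [:1, 1::complex:] = 1 + fps_X"
    using fps_of_poly_linear'[of "1::complex"] by simp
  have "(1 + fps_X) * fps_deriv (?B * ?P) - fps_const c * (?B * ?P)
      = ?B * ((1 + fps_X) * fps_deriv ?P) + ((1 + fps_X) * fps_deriv ?B) * ?P - fps_const c * (?B * ?P)"
    by (simp add: algebra_simps)
  also have "\<dots> = ?B * ((1 + fps_X) * fps_deriv ?P) + fps_const b * ?B * ?P - fps_const c * (?B * ?P)"
    by (simp add: binom_deriv)
  also have "\<dots> = ?B * (fps_const (b - c) * ?P + (1 + fps_X) * fps_deriv ?P)"
    by (simp del: fps_const_sub add: fps_const_sub[symmetric] algebra_simps)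
  also have "\<dots> = ?B * fps_of_poly (Lop b c R)"
  proof -
    have m: "fps_of_poly ([:1,1:] * pderiv R) = (1 + fps_X) * fps_deriv ?P"
      by (simp only: fps_of_poly_mult l fps_of_poly_pderiv)
    show ?thesis unfolding Lop_def fps_of_poly_add m by (simp add: fps_of_poly_smult)
  qed
  finally show ?thesis .
qed

lemma coeff_Lop:
  "coeff (Lop b c R) n = (b - c + of_nat n) * coeff R n + of_nat (Suc n) * coeff R (Suc n)"
proof -
  have "[:1,1::complex:] * pderiv R = pderiv R + pCons 0 (pderiv R)"
    by (simp add: mult_pCons_left)
  then show ?thesis
    by (cases n) (simp_all add: Lop_def coeff_pderiv algebra_simps)
qed

lemma binom_indep_aux:
  fixes R :: "'s \<Rightarrow> complex poly" and be :: "'s \<Rightarrow> complex"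
  assumes "(\<Sum>s\<in>S. degree (R s) + 1) = K"
    and "finite S" "S \<noteq> {}" "\<forall>s\<in>S. R s \<noteq> 0" "\<forall>s\<in>S. \<forall>t\<in>S. s \<noteq> t \<longrightarrow> be s - be t \<notin> \<int>"
  shows "(\<Sum>s\<in>S. fps_binomial (be s) * fps_of_poly (R s)) \<noteq> 0"
  using assms
proof (induction K arbitrary: S R rule: less_induct)
  case (less K S R)
  obtain s1 where s1: "s1 \<in> S" using less.prems(3) by blast
  show ?case
  proof (cases "S = {s1}")
    case True
    have "fps_binomial (be s1) \<noteq> 0"
    proof
      assume "fps_binomial (be s1) = 0"
      then have "fps_nth (fps_binomial (be s1)) 0 = 0" by simp
      then show False by simp
    qed
    moreover have "fps_of_poly (R s1) \<noteq> 0" using less.prems(4) s1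
      by (metis fps_of_poly_0 fps_of_poly_eq_iff)
    ultimately show ?thesis using True by simp
  next
    case False
    then obtain s2 where s2: "s2 \<in> S" "s2 \<noteq> s1" using s1 by blast
    show ?thesis
    proof
    assume sum0: "(\<Sum>s\<in>S. fps_binomial (be s) * fps_of_poly (R s)) = 0"
    define c where "c = be s1 + of_nat (degree (R s1))"
    define R' where "R' s = Lop (be s) c (R s)" for s
    have E: "(\<Sum>s\<in>S. fps_binomial (be s) * fps_of_poly (R' s)) = 0"
    proof -
      let ?F = "\<Sum>s\<in>S. fps_binomial (be s) * fps_of_poly (R s)"
      have "(1 + fps_X) * fps_deriv ?F - fps_const c * ?F = 0" using sum0 by simp
      moreover have "(1 + fps_X) * fps_deriv ?F - fps_const c * ?F
          = (\<Sum>s\<in>S. fps_binomial (be s) * fps_of_poly (R' s))"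
        unfolding fps_deriv_sum sum_distrib_left sum_subtractf[symmetric]
        by (intro sum.cong refl) (simp only: Lop_fps R'_def)
      ultimately show ?thesis by simp
    qed
    have deg_le: "degree (R' s) \<le> degree (R s)" for s
      by (rule degree_le) (auto simp: R'_def coeff_Lop coeff_eq_0)
    have other: "R' s \<noteq> 0" if "s \<in> S" "s \<noteq> s1" for s
    proof
      assume "R' s = 0"
      then have "coeff (R' s) (degree (R s)) = 0" by simp
      then have "(be s - c + of_nat (degree (R s))) * lead_coeff (R s) = 0"
        by (simp add: R'_def coeff_Lop coeff_eq_0)
      moreover have "lead_coeff (R s) \<noteq> 0" using less.prems(4) that by simp
      ultimately have "be s - c + of_nat (degree (R s)) = 0" by simp
      then have "be s - be s1 = of_int (int (degree (R s1)) - int (degree (R s)))"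
        by (simp add: c_def algebra_simps)
      then have "be s - be s1 \<in> \<int>" by simp
      then show False using less.prems(5) that s1 by blast
    qed
    have s1dec: "R' s1 = 0 \<or> degree (R' s1) < degree (R s1)"
    proof (cases "R' s1 = 0")
      case nz: False
      have "coeff (R' s1) (degree (R s1)) = 0"
        by (simp add: R'_def coeff_Lop coeff_eq_0 c_def)
      then have "degree (R' s1) \<noteq> degree (R s1)" using nz by (metis leading_coeff_0_iff)
      then show ?thesis using deg_le[of s1] by simp
    qed simp
    define S' where "S' = {s \<in> S. R' s \<noteq> 0}"
    have S'S: "S' \<subseteq> S" by (auto simp: S'_def)
    have finS': "finite S'" using less.prems(2) S'S finite_subset by blast
    have "S' \<noteq> {}" using s2 other by (auto simp: S'_def)
    define g where "g s = (if s \<in> S' then degree (R' s) + 1 else 0)" for s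
    have "(\<Sum>s\<in>S'. degree (R' s) + 1) = (\<Sum>s\<in>S. g s)"
      unfolding g_def using less.prems(2) S'S by (simp add: sum.If_cases Int_absorb1)
    also have "\<dots> < (\<Sum>s\<in>S. degree (R s) + 1)"
    proof (rule sum_strict_mono_ex1[OF less.prems(2)])
      show "\<forall>x\<in>S. g x \<le> degree (R x) + 1" using deg_le by (auto simp: g_def)
      show "\<exists>a\<in>S. g a < degree (R a) + 1" using s1 s1dec by (auto simp: g_def S'_def)
    qed
    finally have lt: "(\<Sum>s\<in>S'. degree (R' s) + 1) < K" using less.prems(1) by simp
    have "(\<Sum>s\<in>S'. fps_binomial (be s) * fps_of_poly (R' s)) \<noteq> 0"
      by (rule less.IH[OF lt refl finS' \<open>S' \<noteq> {}\<close>]) (use less.prems(5) S'S in \<open>auto simp: S'_def\<close>)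
    moreover have "(\<Sum>s\<in>S'. fps_binomial (be s) * fps_of_poly (R' s))
        = (\<Sum>s\<in>S. fps_binomial (be s) * fps_of_poly (R' s))"
      by (rule sum.mono_neutral_left[OF less.prems(2) S'S]) (auto simp: S'_def)
    ultimately show False using E by simp
    qed
  qed
qed

lemma binom_indep:
  fixes R :: "'s \<Rightarrow> complex poly" and be :: "'s \<Rightarrow> complex"
  assumes "finite S" "\<forall>s\<in>S. \<forall>t\<in>S. s \<noteq> t \<longrightarrow> be s - be t \<notin> \<int>"
    and "(\<Sum>s\<in>S. fps_binomial (be s) * fps_of_poly (R s)) = 0"
  shows "\<forall>s\<in>S. R s = 0"
proof (rule ccontr)
  assume "\<not> (\<forall>s\<in>S. R s = 0)"
  define S' where "S' = {s \<in> S. R s \<noteq> 0}"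
  have S'S: "S' \<subseteq> S" by (auto simp: S'_def)
  have "S' \<noteq> {}" using \<open>\<not> (\<forall>s\<in>S. R s = 0)\<close> by (auto simp: S'_def)
  have "(\<Sum>s\<in>S'. fps_binomial (be s) * fps_of_poly (R s)) \<noteq> 0"
    by (rule binom_indep_aux[OF refl finite_subset[OF S'S assms(1)] \<open>S' \<noteq> {}\<close>])
       (use assms(2) S'S in \<open>auto simp: S'_def\<close>)
  moreover have "(\<Sum>s\<in>S'. fps_binomial (be s) * fps_of_poly (R s))
        = (\<Sum>s\<in>S. fps_binomial (be s) * fps_of_poly (R s))"
    by (rule sum.mono_neutral_left[OF assms(1) S'S]) (auto simp: S'_def)
  ultimately show False using assms(3) by simp
qed

lemma of_rat_Ints: "(of_rat r :: complex) \<in> \<int> \<Longrightarrow> r \<in> \<int>"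
proof -
  assume "(of_rat r :: complex) \<in> \<int>"
  then obtain n where "(of_rat r :: complex) = of_int n" by (auto elim: Ints_cases)
  then have "(of_rat r :: complex) = of_rat (of_int n)" by simp
  then have "r = of_int n" by (simp only: of_rat_eq_iff)
  then show "r \<in> \<int>" by simp
qed

lemma nth_binom_poly:
  fixes be :: complex and a :: "int \<Rightarrow> complex" and K :: "int set"
  assumes "finite K" "\<forall>k\<in>K. k \<le> N"
  shows "fps_nth (fps_binomial be * fps_of_poly (\<Sum>k\<in>K. monom (a k) (nat (N - k)))) n
       = (\<Sum>k\<in>K. a k * bc be (k - (N - int n)))"
proof -
  have "fps_binomial be * fps_of_poly (\<Sum>k\<in>K. monom (a k) (nat (N - k)))
      = (\<Sum>k\<in>K. (fps_const (a k) * fps_binomial be) * fps_X ^ nat (N - k))"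
    by (simp add: fps_of_poly_sum fps_of_poly_monom sum_distrib_left algebra_simps)
  then have "fps_nth (fps_binomial be * fps_of_poly (\<Sum>k\<in>K. monom (a k) (nat (N - k)))) n
      = (\<Sum>k\<in>K. fps_nth ((fps_const (a k) * fps_binomial be) * fps_X ^ nat (N - k)) n)"
    by (simp add: fps_sum_nth)
  also have "\<dots> = (\<Sum>k\<in>K. a k * bc be (k - (N - int n)))"
  proof (rule sum.cong[OF refl])
    fix k assume "k \<in> K"
    then have kN: "k \<le> N" using assms(2) by blast
    show "fps_nth ((fps_const (a k) * fps_binomial be) * fps_X ^ nat (N - k)) n = a k * bc be (k - (N - int n))"
    proof (cases "nat (N - k) \<le> n")
      case True
      then have "nat (k - (N - int n)) = n - nat (N - k)" using kN by linarith
      then show ?thesis using True kN by (simp add: fps_X_power_mult_right_nth bc_def)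
    next
      case False
      then show ?thesis using kN by (simp add: fps_X_power_mult_right_nth bc_def)
    qed
  qed
  finally show ?thesis .
qed

lemma annih:
  fixes T :: nat and N :: int and q :: "nat \<Rightarrow> int" and Q :: "nat \<Rightarrow> rat"
    and a :: "nat \<times> int \<Rightarrow> complex"
  assumes dist: "\<forall>i<T. \<forall>j<T. i \<noteq> j \<longrightarrow> Q i - Q j \<notin> \<int>"
    and ann: "\<forall>j. (\<Sum>x\<in>(SIGMA s:{..<T}. {q s<..N}). a x * bc (- of_rat (Q (fst x))) (snd x - j)) = 0"
  shows "\<forall>x\<in>(SIGMA s:{..<T}. {q s<..N}). a x = 0"
proof -
  define be where "be s = - (of_rat (Q s) :: complex)" for s
  define R where "R s = (\<Sum>k\<in>{q s<..N}. monom (a (s, k)) (nat (N - k)))" for s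
  have "(\<Sum>s\<in>{..<T}. fps_binomial (be s) * fps_of_poly (R s)) = 0"
  proof (rule fps_ext)
    fix n
    have "fps_nth (\<Sum>s\<in>{..<T}. fps_binomial (be s) * fps_of_poly (R s)) n
        = (\<Sum>s\<in>{..<T}. \<Sum>k\<in>{q s<..N}. a (s, k) * bc (be s) (k - (N - int n)))"
      unfolding fps_sum_nth R_def by (intro sum.cong refl nth_binom_poly) auto
    also have "\<dots> = (\<Sum>x\<in>(SIGMA s:{..<T}. {q s<..N}). a x * bc (- of_rat (Q (fst x))) (snd x - (N - int n)))"
      by (subst sum.Sigma) (auto simp: be_def split_def)
    also have "\<dots> = 0" using ann by blast
    finally show "fps_nth (\<Sum>s\<in>{..<T}. fps_binomial (be s) * fps_of_poly (R s)) n = fps_nth 0 n" by simp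
  qed
  moreover have "\<forall>s\<in>{..<T}. \<forall>t\<in>{..<T}. s \<noteq> t \<longrightarrow> be s - be t \<notin> \<int>"
  proof (intro ballI impI notI)
    fix s t assume st: "s \<in> {..<T}" "t \<in> {..<T}" "s \<noteq> t" and "be s - be t \<in> \<int>"
    then have "(of_rat (Q t - Q s) :: complex) \<in> \<int>" by (simp add: be_def of_rat_diff)
    then have "Q t - Q s \<in> \<int>" by (rule of_rat_Ints)
    then show False using dist st by auto
  qed
  ultimately have R0: "\<forall>s\<in>{..<T}. R s = 0" using binom_indep[of "{..<T}" be R] by blast
  show ?thesis
  proof
    fix x assume x: "x \<in> (SIGMA s:{..<T}. {q s<..N})"
    obtain s k where xsk: "x = (s, k)" by (cases x)
    have s: "s < T" and k: "q s < k" "k \<le> N" using x xsk by auto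
    have "coeff (R s) (nat (N - k)) = (\<Sum>k'\<in>{q s<..N}. if k' = k then a (s, k') else 0)"
      unfolding R_def coeff_sum coeff_monom
      by (rule sum.cong) (use k in auto)
    also have "\<dots> = a (s, k)" using k by (subst sum.delta) auto
    finally show "a x = 0" using R0 s xsk by simp
  qed
qed

lemma Ospace_laurent: "Ospace N Q q \<subseteq> laurent"
  by (auto simp: Ospace_char Ochar_def)

lemma Ospace_zero: "0 \<in> Ospace N Q q"
  unfolding Ospace_def by (rule M.span_zero)

lemma Ospace_add: "f \<in> Ospace N Q q \<Longrightarrow> g \<in> Ospace N Q q \<Longrightarrow> f + g \<in> Ospace N Q q"
  unfolding Ospace_def by (rule M.span_add)

lemma Ospace_diff: "f \<in> Ospace N Q q \<Longrightarrow> g \<in> Ospace N Q q \<Longrightarrow> f - g \<in> Ospace N Q q"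
  unfolding Ospace_def by (rule M.span_diff)

lemma coset_eqI:
  assumes "\<And>f g. f \<in> W \<Longrightarrow> g \<in> W \<Longrightarrow> f + g \<in> W"
    and "\<And>f g. f \<in> W \<Longrightarrow> g \<in> W \<Longrightarrow> f - g \<in> W"
    and "h - h' \<in> W"
  shows "coset W h = coset W h'"
proof -
  have "coset W h \<subseteq> coset W h'" if d: "h - h' \<in> W" for h h'
  proof
    fix x assume "x \<in> coset W h"
    then obtain g where g: "g \<in> W" "x = h + g" by (auto simp: coset_def)
    then have e: "x = h' + ((h - h') + g)" by (simp add: algebra_simps)
    have m: "(h - h') + g \<in> W" using assms(1) d g by blast
    show "x \<in> coset W h'" unfolding coset_def using e m by blast
  qed
  moreover have "h' - h \<in> W"
  proof -
    have "0 \<in> W" using assms(2)[OF assms(3) assms(3)] by simp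
    from assms(2)[OF this assms(3)] show ?thesis by (simp add: algebra_simps)
  qed
  ultimately show ?thesis using assms(3) by blast
qed

lemma coset_eqD:
  assumes "0 \<in> W" "\<And>f g. f \<in> W \<Longrightarrow> g \<in> W \<Longrightarrow> f - g \<in> W"
    and "coset W h = coset W h'"
  shows "h - h' \<in> W"
proof -
  have "h + 0 \<in> coset W h" using assms(1) unfolding coset_def by blast
  then have "h \<in> coset W h'" using assms(3) by simp
  then obtain g where g: "g \<in> W" "h = h' + g" by (auto simp: coset_def)
  then show ?thesis by simp
qed

theorem mainTheorem5:
  fixes T :: nat and N :: int and q :: "nat \<Rightarrow> int" and Q :: "nat \<Rightarrow> rat"
  assumes "T > 0"
    and "\<forall>i<T. \<forall>j<T. i \<noteq> j \<longrightarrow> Q i - Q j \<notin> \<int>"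
  shows "bij_betw
     (\<lambda>C. restrict (\<lambda>s. {f + g | f g. f \<in> C \<and> g \<in> Ospace N (Q s) (q s)}) {..<T})
     (quot laurent (\<Inter>s<T. Ospace N (Q s) (q s)))
     (Pi\<^sub>E {..<T} (\<lambda>s. quot laurent (Ospace N (Q s) (q s))))"
proof -
  define Os where "Os s = Ospace N (Q s) (q s)" for s
  define I where "I = (\<Inter>s<T. Os s)"
  define F where "F C = restrict (\<lambda>s. {f + g | f g. f \<in> C \<and> g \<in> Os s}) {..<T}" for C
  have I0: "0 \<in> I" by (auto simp: I_def Os_def Ospace_zero)
  have Iadd: "f + g \<in> I" if "f \<in> I" "g \<in> I" for f g
    using that by (auto simp: I_def Os_def Ospace_add)
  have Idiff: "f - g \<in> I" if "f \<in> I" "g \<in> I" for f g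
    using that by (auto simp: I_def Os_def Ospace_diff)
  have img: "{f + g | f g. f \<in> coset I h \<and> g \<in> Os s} = coset (Os s) h" if s: "s < T" for h s
  proof
    show "{f + g | f g. f \<in> coset I h \<and> g \<in> Os s} \<subseteq> coset (Os s) h"
    proof
      fix x assume "x \<in> {f + g | f g. f \<in> coset I h \<and> g \<in> Os s}"
      then obtain i g where ig: "i \<in> I" "g \<in> Os s" "x = (h + i) + g" by (auto simp: coset_def)
      have "i \<in> Os s" using ig(1) s by (auto simp: I_def)
      then have "i + g \<in> Os s" using ig(2) by (simp add: Os_def Ospace_add)
      moreover have "x = h + (i + g)" using ig(3) by (simp add: algebra_simps)
      ultimately show "x \<in> coset (Os s) h" by (auto simp: coset_def)
    qed
    show "coset (Os s) h \<subseteq> {f + g | f g. f \<in> coset I h \<and> g \<in> Os s}"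
    proof
      fix x assume "x \<in> coset (Os s) h"
      then obtain g where g: "g \<in> Os s" "x = h + g" by (auto simp: coset_def)
      have "h + 0 \<in> coset I h" using I0 by (auto simp: coset_def)
      then show "x \<in> {f + g | f g. f \<in> coset I h \<and> g \<in> Os s}" using g by force
    qed
  qed
  have Fc: "F (coset I h) = restrict (\<lambda>s. coset (Os s) h) {..<T}" for h
    unfolding F_def by (intro restrict_ext) (simp add: img)
  have "bij_betw F (quot laurent I) (Pi\<^sub>E {..<T} (\<lambda>s. quot laurent (Os s)))"
    unfolding bij_betw_def
  proof (intro conjI)
    show "inj_on F (quot laurent I)"
    proof (rule inj_onI)
      fix C1 C2 assume C: "C1 \<in> quot laurent I" "C2 \<in> quot laurent I" "F C1 = F C2"
      then obtain h1 h2 where h: "C1 = coset I h1" "C2 = coset I h2" by (auto simp: quot_def)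
      have "h1 - h2 \<in> Os s" if s: "s < T" for s
      proof -
        have "coset (Os s) h1 = coset (Os s) h2"
          using fun_cong[OF C(3), of s] s by (simp add: h Fc)
        then show ?thesis
          by (rule coset_eqD[rotated 2]) (auto simp: Os_def Ospace_zero Ospace_diff)
      qed
      then have "h1 - h2 \<in> I" by (auto simp: I_def)
      then show "C1 = C2" unfolding h
        by (rule coset_eqI[rotated 2]) (simp_all add: Iadd Idiff)
    qed
    show "F ` quot laurent I = Pi\<^sub>E {..<T} (\<lambda>s. quot laurent (Os s))"
    proof
      show "F ` quot laurent I \<subseteq> Pi\<^sub>E {..<T} (\<lambda>s. quot laurent (Os s))"
        by (auto simp: quot_def Fc)
      show "Pi\<^sub>E {..<T} (\<lambda>s. quot laurent (Os s)) \<subseteq> F ` quot laurent I"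
      proof
        fix Y assume Y: "Y \<in> Pi\<^sub>E {..<T} (\<lambda>s. quot laurent (Os s))"
        have "\<forall>s\<in>{..<T}. \<exists>h. h \<in> laurent \<and> Y s = coset (Os s) h"
          using Y by (auto simp: quot_def)
        then obtain hs where hs: "\<And>s. s < T \<Longrightarrow> hs s \<in> laurent \<and> Y s = coset (Os s) (hs s)"
          by (metis lessThan_iff)
        define be where "be s = - (of_rat (Q s) :: complex)" for s
        define A where "A = (SIGMA s:{..<T}. {q s<..N})"
        define Phi where "Phi h = (\<lambda>x::nat \<times> int. phi (be (fst x)) (snd x) h)" for h
        have "\<exists>u\<in>Phi ` laurent. \<forall>x\<in>A. u x = phi (be (fst x)) (snd x) (hs (fst x))"
        proof (rule fin_surj)
          show "finite A" unfolding A_def by auto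
          show "(\<lambda>x. 0) \<in> Phi ` laurent"
            by (rule image_eqI[where x=0]) (auto simp: Phi_def)
          show "(\<lambda>x. u x + v x) \<in> Phi ` laurent" if uv: "u \<in> Phi ` laurent" "v \<in> Phi ` laurent" for u v
          proof -
            obtain h1 where "u = Phi h1" "h1 \<in> laurent" using uv(1) by (rule imageE)
            moreover obtain h2 where "v = Phi h2" "h2 \<in> laurent" using uv(2) by (rule imageE)
            ultimately show ?thesis
              by (intro image_eqI[where x="h1 + h2"]) (auto simp: Phi_def phi_add)
          qed
          show "(\<lambda>x. c * u x) \<in> Phi ` laurent" if uu: "u \<in> Phi ` laurent" for c u
          proof -
            obtain h1 where "u = Phi h1" "h1 \<in> laurent" using uu by (rule imageE)
            then show ?thesis
              by (intro image_eqI[where x="cscale c h1"]) (auto simp: Phi_def phi_scale)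
          qed
          show "\<forall>x\<in>A. a x = 0" if ann: "\<forall>u\<in>Phi ` laurent. (\<Sum>x\<in>A. a x * u x) = 0" for a
          proof -
            have "\<forall>j. (\<Sum>x\<in>(SIGMA s:{..<T}. {q s<..N}). a x * bc (- of_rat (Q (fst x))) (snd x - j)) = 0"
            proof
              fix j
              have "Phi (lmono j) \<in> Phi ` laurent" by auto
              from bspec[OF ann this] have "(\<Sum>x\<in>A. a x * Phi (lmono j) x) = 0" .
              then show "(\<Sum>x\<in>(SIGMA s:{..<T}. {q s<..N}). a x * bc (- of_rat (Q (fst x))) (snd x - j)) = 0"
                by (simp add: A_def Phi_def phi_lmono be_def)
            qed
            from annih[OF assms(2) this] show ?thesis by (simp add: A_def)
          qed
        qed
        then obtain h where h: "h \<in> laurent"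
          and hphi: "\<And>s k. s < T \<Longrightarrow> q s < k \<Longrightarrow> k \<le> N \<Longrightarrow> phi (be s) k h = phi (be s) k (hs s)"
          by (auto simp: A_def Phi_def)
        have "Y = F (coset I h)"
        proof
          fix s
          show "Y s = F (coset I h) s"
          proof (cases "s < T")
            case True
            have "h - hs s \<in> Os s"
              unfolding Os_def Ospace_char Ochar_def
              using h hs[OF True] hphi[OF True] by (auto simp: phi_diff be_def)
            then have "coset (Os s) h = coset (Os s) (hs s)"
              by (rule coset_eqI[rotated 2]) (auto simp: Os_def Ospace_add Ospace_diff)
            then show ?thesis using hs[OF True] True by (simp add: Fc)
          next
            case False
            have "Y s = undefined" by (rule PiE_arb[OF Y]) (use False in simp)
            moreover have "F (coset I h) s = undefined" using False by (simp add: Fc)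
            ultimately show ?thesis by simp
          qed
        qed
        moreover have "coset I h \<in> quot laurent I" using h by (simp add: quot_def)
        ultimately show "Y \<in> F ` quot laurent I" by (rule image_eqI)
      qed
    qed
  qed
  moreover have "F = (\<lambda>C. restrict (\<lambda>s. {f + g | f g. f \<in> C \<and> g \<in> Ospace N (Q s) (q s)}) {..<T})"
    by (rule ext) (simp add: F_def Os_def)
  ultimately show ?thesis by (simp add: Os_def I_def)
qed

end
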